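(* Let $\pi$ be a set of primes, $G$ a finite group with the property $C_\pi$, $A$ a normal subgroup of $G$, $H$ a $\pi$-Hall subgroup of $G$, and assume $HA\trianglelefteq G$. Then $k_\pi^G(A)=k_\pi^{HA}(A)$.
   Context: All groups are finite. A subgroup $H$ of $G$ is a $\pi$-Hall subgroup if all prime divisors of $|H|$ lie in $\pi$ and no prime divisor of $|G:H|$ lies in $\pi$. $G$ has the property $E_\pi$ if it contains a $\pi$-Hall subgroup; $G$ has the property $C_\pi$ if it has $E_\pi$ and any two $\pi$-Hall subgroups of $G$ are conjugate in $G$. For a subnormal subgroup $A$ of a group $G$ with property $E_\pi$, a $G$-induced $\pi$-Hall subgroup of $A$ is a subgroup $K\cap A$ with $K$ a $\pi$-Hall subgroup of $G$; an $A$-class of $G$-induced $\pi$-Hall subgroups is a set $\{(K\cap A)^x\mid x\in A\}$ with $K$ a $\pi$-Hall subgroup of $G$; and $k_\pi^G(A)$ denotes the number of distinct $A$-classes of $G$-induced $\pi$-Hall subgroups of $A$. *)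

theory Defs
  imports "HOL-Algebra.Algebra" "HOL-Computational_Algebra.Primes"
begin

definition pi_hall :: "('a, 'b) monoid_scheme \<Rightarrow> nat set \<Rightarrow> 'a set \<Rightarrow> bool" where
  "pi_hall G \<pi> H \<longleftrightarrow> subgroup H G
     \<and> (\<forall>p. Factorial_Ring.prime p \<and> p dvd card H \<longrightarrow> p \<in> \<pi>)
     \<and> (\<forall>p. Factorial_Ring.prime p \<and> p dvd card (rcosets\<^bsub>G\<^esub> H) \<longrightarrow> p \<notin> \<pi>)"

definition E_pi :: "('a, 'b) monoid_scheme \<Rightarrow> nat set \<Rightarrow> bool" where
  "E_pi G \<pi> \<longleftrightarrow> (\<exists>H. pi_hall G \<pi> H)"

definition conj_set :: "('a, 'b) monoid_scheme \<Rightarrow> 'a set \<Rightarrow> 'a \<Rightarrow> 'a set" where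
  "conj_set G S y = (\<lambda>z. y \<otimes>\<^bsub>G\<^esub> z \<otimes>\<^bsub>G\<^esub> inv\<^bsub>G\<^esub> y) ` S"

definition C_pi :: "('a, 'b) monoid_scheme \<Rightarrow> nat set \<Rightarrow> bool" where
  "C_pi G \<pi> \<longleftrightarrow> E_pi G \<pi> \<and>
     (\<forall>H K. pi_hall G \<pi> H \<and> pi_hall G \<pi> K \<longrightarrow> (\<exists>g\<in>carrier G. K = conj_set G H g))"

definition induced_class :: "('a, 'b) monoid_scheme \<Rightarrow> 'a set \<Rightarrow> 'a set \<Rightarrow> 'a set set" where
  "induced_class G A K = {conj_set G (K \<inter> A) x | x. x \<in> A}"

definition k_pi :: "('a, 'b) monoid_scheme \<Rightarrow> nat set \<Rightarrow> 'a set \<Rightarrow> nat" where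
  "k_pi G \<pi> A = card {induced_class G A K | K. pi_hall G \<pi> K}"

end

theory Submission
  imports Defs
begin

lemma idx_mult:
  assumes G: "group G" and fin: "finite (carrier G)"
    and M: "subgroup M G" and K: "subgroup K (G\<lparr>carrier := M\<rparr>)"
  shows "card (rcosets\<^bsub>G\<^esub> K) = card (rcosets\<^bsub>G\<^esub> M) * card (rcosets\<^bsub>G\<lparr>carrier := M\<rparr>\<^esub> K)"
proof -
  interpret group G by (rule G)
  have GM: "group (G\<lparr>carrier := M\<rparr>)" using subgroup.subgroup_is_group[OF M G] .
  have KG: "subgroup K G" using incl_subgroup[OF M K] .
  have "finite K" using KG fin subgroup.subset finite_subset by metis
  moreover have "K \<noteq> {}" using KG subgroup.one_closed by blast
  ultimately have pos: "card K > 0" by (simp add: card_gt_0_iff)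
  have l1: "card (rcosets\<^bsub>G\<^esub> K) * card K = order G" using lagrange[OF KG] .
  have l2: "card (rcosets\<^bsub>G\<^esub> M) * card M = order G" using lagrange[OF M] .
  have l3: "card (rcosets\<^bsub>G\<lparr>carrier := M\<rparr>\<^esub> K) * card K = card M"
    using group.lagrange[OF GM K] by (simp add: order_def)
  have "card (rcosets\<^bsub>G\<^esub> K) * card K = (card (rcosets\<^bsub>G\<^esub> M) * card (rcosets\<^bsub>G\<lparr>carrier := M\<rparr>\<^esub> K)) * card K"
    using l1 l2 l3 by (metis mult.assoc)
  then show ?thesis using pos by simp
qed

lemma prime_dvd_mult_nat': "Factorial_Ring.prime (p::nat) \<Longrightarrow> p dvd a * b \<Longrightarrow> p dvd a \<or> p dvd b"
  using prime_dvd_mult_iff by blast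

theorem lemma7:
  fixes G :: "('a, 'b) monoid_scheme" and \<pi> :: "nat set" and A H :: "'a set"
  assumes "group G" and "finite (carrier G)"
    and "\<forall>p\<in>\<pi>. Factorial_Ring.prime p"
    and "C_pi G \<pi>"
    and "A \<lhd> G"
    and "pi_hall G \<pi> H"
    and "(H <#>\<^bsub>G\<^esub> A) \<lhd> G"
  shows "k_pi G \<pi> A = k_pi (G\<lparr>carrier := H <#>\<^bsub>G\<^esub> A\<rparr>) \<pi> A"
proof -
  interpret group G by (rule assms(1))
  define M where "M = H <#>\<^bsub>G\<^esub> A"
  have MG: "subgroup M G" using assms(7) normal_imp_subgroup M_def by blast
  have AG: "subgroup A G" using assms(5) normal_imp_subgroup by blast
  have HG: "subgroup H G" using assms(6) pi_hall_def by blast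
  have HM: "H \<subseteq> M"
  proof
    fix h assume "h \<in> H"
    then have "h \<otimes>\<^bsub>G\<^esub> \<one>\<^bsub>G\<^esub> \<in> M" unfolding M_def set_mult_def
      using subgroup.one_closed[OF AG] by blast
    then show "h \<in> M" using \<open>h \<in> H\<close> HG subgroup.mem_carrier by fastforce
  qed
  have AM: "A \<subseteq> M"
  proof
    fix a assume "a \<in> A"
    then have "\<one>\<^bsub>G\<^esub> \<otimes>\<^bsub>G\<^esub> a \<in> M" unfolding M_def set_mult_def
      using subgroup.one_closed[OF HG] by blast
    then show "a \<in> M" using \<open>a \<in> A\<close> AG subgroup.mem_carrier by fastforce
  qed
  have HMsub: "subgroup H (G\<lparr>carrier := M\<rparr>)" using subgroup_incl[OF HG MG HM] .
  have idxH: "card (rcosets\<^bsub>G\<^esub> H) = card (rcosets\<^bsub>G\<^esub> M) * card (rcosets\<^bsub>G\<lparr>carrier := M\<rparr>\<^esub> H)"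
    using idx_mult[OF assms(1,2) MG HMsub] .
  have hall_eq: "pi_hall G \<pi> K \<longleftrightarrow> pi_hall (G\<lparr>carrier := M\<rparr>) \<pi> K" for K
  proof
    assume K: "pi_hall G \<pi> K"
    have KG: "subgroup K G" using K pi_hall_def by blast
    obtain g where g: "g \<in> carrier G" "K = conj_set G H g"
      using assms(4) K assms(6) unfolding C_pi_def by blast
    have KM: "K \<subseteq> M"
    proof
      fix k assume "k \<in> K"
      then obtain h where "h \<in> H" "k = g \<otimes>\<^bsub>G\<^esub> h \<otimes>\<^bsub>G\<^esub> inv\<^bsub>G\<^esub> g" using g unfolding conj_set_def by auto
      then show "k \<in> M" using normal.inv_op_closed2[OF assms(7)[folded M_def] g(1)] HM by auto
    qed
    have KMs: "subgroup K (G\<lparr>carrier := M\<rparr>)" using subgroup_incl[OF KG MG KM] .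
    have idx: "card (rcosets\<^bsub>G\<^esub> K) = card (rcosets\<^bsub>G\<^esub> M) * card (rcosets\<^bsub>G\<lparr>carrier := M\<rparr>\<^esub> K)"
      using idx_mult[OF assms(1,2) MG KMs] .
    show "pi_hall (G\<lparr>carrier := M\<rparr>) \<pi> K"
      unfolding pi_hall_def
    proof (intro conjI allI impI KMs)
      fix p assume "Factorial_Ring.prime p \<and> p dvd card K"
      then show "p \<in> \<pi>" using K pi_hall_def by blast
    next
      fix p assume p: "Factorial_Ring.prime p \<and> p dvd card (rcosets\<^bsub>G\<lparr>carrier := M\<rparr>\<^esub> K)"
      then have "p dvd card (rcosets\<^bsub>G\<^esub> K)" using idx by simp
      then show "p \<notin> \<pi>" using K p pi_hall_def by blast
    qed
  next
    assume K: "pi_hall (G\<lparr>carrier := M\<rparr>) \<pi> K"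
    have KMs: "subgroup K (G\<lparr>carrier := M\<rparr>)" using K pi_hall_def by blast
    have KG: "subgroup K G" using incl_subgroup[OF MG KMs] .
    have idx: "card (rcosets\<^bsub>G\<^esub> K) = card (rcosets\<^bsub>G\<^esub> M) * card (rcosets\<^bsub>G\<lparr>carrier := M\<rparr>\<^esub> K)"
      using idx_mult[OF assms(1,2) MG KMs] .
    show "pi_hall G \<pi> K"
      unfolding pi_hall_def
    proof (intro conjI allI impI KG)
      fix p assume "Factorial_Ring.prime p \<and> p dvd card K"
      then show "p \<in> \<pi>" using K pi_hall_def by blast
    next
      fix p assume p: "Factorial_Ring.prime p \<and> p dvd card (rcosets\<^bsub>G\<^esub> K)"
      show "p \<notin> \<pi>"
      proof
        assume pin: "p \<in> \<pi>"
        from p idx have "p dvd card (rcosets\<^bsub>G\<^esub> M) \<or> p dvd card (rcosets\<^bsub>G\<lparr>carrier := M\<rparr>\<^esub> K)"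
          using prime_dvd_mult_nat' by metis
        then show False
        proof
          assume "p dvd card (rcosets\<^bsub>G\<^esub> M)"
          then have "p dvd card (rcosets\<^bsub>G\<^esub> H)" using idxH by simp
          then show False using assms(6) p pin pi_hall_def by blast
        next
          assume "p dvd card (rcosets\<^bsub>G\<lparr>carrier := M\<rparr>\<^esub> K)"
          then show False using K p pin pi_hall_def by blast
        qed
      qed
    qed
  qed
  have cls_eq: "induced_class G A K = induced_class (G\<lparr>carrier := M\<rparr>) A K" for K
  proof -
    have "conj_set G (K \<inter> A) x = conj_set (G\<lparr>carrier := M\<rparr>) (K \<inter> A) x" if "x \<in> A" for x
    proof -
      have "inv\<^bsub>G\<lparr>carrier := M\<rparr>\<^esub> x = inv\<^bsub>G\<^esub> x" using m_inv_consistent[OF MG] that AM by blast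
      then show ?thesis unfolding conj_set_def by simp
    qed
    then show ?thesis unfolding induced_class_def by blast
  qed
  have "{induced_class G A K | K. pi_hall G \<pi> K} =
        {induced_class (G\<lparr>carrier := M\<rparr>) A K | K. pi_hall (G\<lparr>carrier := M\<rparr>) \<pi> K}"
    using hall_eq cls_eq by auto
  then show ?thesis unfolding k_pi_def M_def by simp
qed

end
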